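(* Let $c,o$ be vertices with a directed path from $c$ to $o$, and put $\delta=\delta_{co}$. Assume that the polynomials $b(s)q(s)$ and $a(s)p(s)$ have no common root. If $s_0$ is a root of $b(s)q(s)$ of multiplicity $m$, then $s_0$ is a zero of the rational function $T_{co}(s)$ of multiplicity exactly $(\delta+1)m$.
   Context: $\mathcal G$ is a weighted directed graph on $\{1,\dots,N\}$ with adjacency matrix $A=[a_{ij}]$. Here $a_{ij}>0$ if there is an arc from $j$ to $i$ and $a_{ij}=0$ otherwise (no self-loops). The Laplacian is $L=D-A$ with $D=\mathrm{diag}(\sum_j a_{ij})$. A directed path from $u$ to $w$ is a sequence of distinct vertices $u=v_0,\dots,v_\ell=w$ with an arc from $v_k$ to $v_{k+1}$ for each $k$, and $\ell$ is its length. $\delta_{uw}$ is the length of a shortest directed path from $u$ to $w$. $e_i$ is the $i$-th canonical basis vector. Let $a,b,p,q$ be nonzero real polynomials and $M(s)=\frac{b(s)q(s)}{a(s)p(s)}$. The network is $y=M(s)[-Ly+r]$. $T_{co}(s)=e_o^T(I+M(s)L)^{-1}M(s)e_c$ is the transfer function from $r_c$ to $y_o$ with all other inputs zero. *)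

theory Defs
  imports "HOL-Computational_Algebra.Fraction_Field" "HOL-Computational_Algebra.Polynomial"
    "Jordan_Normal_Form.Matrix"
begin

text \<open>Vertices are 0..<N (0-based instead of 1..N). A is the weighted adjacency matrix:
  A(i,j) > 0 iff there is an arc from j to i.\<close>

definition weighted_digraph :: "nat \<Rightarrow> real mat \<Rightarrow> bool" where
  "weighted_digraph N A \<longleftrightarrow> A \<in> carrier_mat N N \<and>
     (\<forall>i<N. \<forall>j<N. A $$ (i,j) \<ge> 0) \<and> (\<forall>i<N. A $$ (i,i) = 0)"

definition arc :: "real mat \<Rightarrow> nat \<Rightarrow> nat \<Rightarrow> bool" where
  "arc A j i \<longleftrightarrow> A $$ (i,j) > 0"

text \<open>A directed path from u to w, as the list of its distinct vertices v0,...,vl; its length is l.\<close>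
definition is_dpath :: "nat \<Rightarrow> real mat \<Rightarrow> nat \<Rightarrow> nat \<Rightarrow> nat list \<Rightarrow> bool" where
  "is_dpath N A u w vs \<longleftrightarrow> vs \<noteq> [] \<and> distinct vs \<and> set vs \<subseteq> {..<N} \<and>
     hd vs = u \<and> last vs = w \<and> (\<forall>k. k + 1 < length vs \<longrightarrow> arc A (vs ! k) (vs ! (k+1)))"

definition has_dpath :: "nat \<Rightarrow> real mat \<Rightarrow> nat \<Rightarrow> nat \<Rightarrow> bool" where
  "has_dpath N A u w \<longleftrightarrow> (\<exists>vs. is_dpath N A u w vs)"

definition dpath_dist :: "nat \<Rightarrow> real mat \<Rightarrow> nat \<Rightarrow> nat \<Rightarrow> nat" where
  "dpath_dist N A u w = (LEAST l. \<exists>vs. is_dpath N A u w vs \<and> length vs = l + 1)"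

definition laplacian :: "nat \<Rightarrow> real mat \<Rightarrow> real mat" where
  "laplacian N A = mat N N (\<lambda>(i,j). (if i = j then (\<Sum>k<N. A $$ (i,k)) else 0) - A $$ (i,j))"

text \<open>Rational functions: the fraction field of complex polynomials (real polynomials embedded).\<close>
type_synonym rfun = "complex poly fract"

definition cpoly :: "real poly \<Rightarrow> complex poly" where
  "cpoly f = map_poly complex_of_real f"

definition const_rf :: "real \<Rightarrow> rfun" where
  "const_rf x = Fraction_Field.Fract [:complex_of_real x:] 1"

definition Mfun :: "real poly \<Rightarrow> real poly \<Rightarrow> real poly \<Rightarrow> real poly \<Rightarrow> rfun" where
  "Mfun a b p q = Fraction_Field.Fract (cpoly (b * q)) (cpoly (a * p))"

definition mat_inv :: "'a::field mat \<Rightarrow> 'a mat" where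
  "mat_inv K = (SOME B. inverts_mat K B \<and> inverts_mat B K)"

definition transfer_fun ::
  "nat \<Rightarrow> real mat \<Rightarrow> real poly \<Rightarrow> real poly \<Rightarrow> real poly \<Rightarrow> real poly \<Rightarrow> nat \<Rightarrow> nat \<Rightarrow> rfun" where
  "transfer_fun N A a b p q c ob =
    (let M = Mfun a b p q;
         Lr = map_mat const_rf (laplacian N A);
         K = 1\<^sub>m N + M \<cdot>\<^sub>m Lr
     in (mat_inv K * (M \<cdot>\<^sub>m 1\<^sub>m N)) $$ (ob, c))"

text \<open>r has a zero of multiplicity exactly k at z: r = n/d with n, d nonzero and
  order z n - order z d = k (independent of the representation).\<close>
definition zero_mult :: "rfun \<Rightarrow> complex \<Rightarrow> int \<Rightarrow> bool" where
  "zero_mult r z k \<longleftrightarrow> (\<exists>n d. n \<noteq> 0 \<and> d \<noteq> 0 \<and> r = Fraction_Field.Fract n d \<and>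
      int (order z n) - int (order z d) = k)"

end

theory Submission
  imports Defs "Jordan_Normal_Form.Determinant"
begin


lemma path_prepend:
  assumes P: "is_dpath N A i t vs" and a: "arc A j i" and j: "j < N"
  shows "\<exists>ws. is_dpath N A j t ws \<and> length ws \<le> Suc (length vs)"
proof (cases "j \<in> set vs")
  case True
  then obtain xs ys where vs: "vs = xs @ j # ys" by (meson split_list)
  have "is_dpath N A j t (j # ys)"
    unfolding is_dpath_def
  proof (intro conjI allI impI)
    show "distinct (j # ys)" using P vs unfolding is_dpath_def by auto
    show "set (j # ys) \<subseteq> {..<N}" using P vs unfolding is_dpath_def by auto
    show "last (j # ys) = t" using P vs unfolding is_dpath_def by auto
    fix k assume k: "k + 1 < length (j # ys)"
    have "length xs + k + 1 < length vs" using k vs by simp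
    then have "arc A (vs ! (length xs + k)) (vs ! (length xs + k + 1))"
      using P unfolding is_dpath_def by blast
    moreover have "vs ! (length xs + k) = (j # ys) ! k" using vs by (simp add: nth_append)
    moreover have "vs ! (length xs + k + 1) = (j # ys) ! (k+1)" using vs
      by (metis add.assoc nth_append_length_plus)
    ultimately show "arc A ((j # ys) ! k) ((j # ys) ! (k + 1))" by simp
  qed auto
  moreover have "length (j # ys) \<le> Suc (length vs)" using vs by simp
  ultimately show ?thesis by blast
next
  case False
  have "is_dpath N A j t (j # vs)"
    unfolding is_dpath_def
  proof (intro conjI allI impI)
    show "distinct (j # vs)" using P False unfolding is_dpath_def by auto
    show "set (j # vs) \<subseteq> {..<N}" using P j unfolding is_dpath_def by auto
    show "last (j # vs) = t" using P unfolding is_dpath_def by auto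
    fix k assume k: "k + 1 < length (j # vs)"
    show "arc A ((j # vs) ! k) ((j # vs) ! (k + 1))"
    proof (cases k)
      case 0
      then show ?thesis proof -
        have "vs ! 0 = i" using P unfolding is_dpath_def by (metis hd_conv_nth)
        then show ?thesis using 0 a by simp
      qed
    next
      case (Suc k')
      then show ?thesis using P k unfolding is_dpath_def by auto
    qed
  qed auto
  then show ?thesis by (intro exI[of _ "j # vs"]) simp
qed

lemma path_tl:
  assumes P: "is_dpath N A j t vs" and l: "2 \<le> length vs"
  shows "is_dpath N A (vs ! 1) t (tl vs) \<and> arc A j (vs ! 1) \<and> vs ! 1 \<noteq> j \<and> vs ! 1 < N"
proof -
  obtain x ys where vs: "vs = x # ys" and ys: "ys \<noteq> []" using l by (cases vs; cases "tl vs") auto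
  have x: "x = j" using P vs unfolding is_dpath_def by auto
  have "is_dpath N A (vs ! 1) t (tl vs)"
    unfolding is_dpath_def using P vs ys unfolding is_dpath_def
    by (auto simp: hd_conv_nth)
  moreover have "arc A j (vs ! 1)" using P l x vs unfolding is_dpath_def
    by (metis One_nat_def Suc_1 Suc_le_eq add_0 nth_Cons_0)
  moreover have "vs ! 1 \<noteq> j" using P vs ys x unfolding is_dpath_def
    by (cases ys) auto
  moreover have "vs ! 1 < N" using P vs ys unfolding is_dpath_def
    by (cases ys) auto
  ultimately show ?thesis by blast
qed

definition reach :: "nat \<Rightarrow> real mat \<Rightarrow> nat \<Rightarrow> nat \<Rightarrow> nat \<Rightarrow> bool" where
  "reach N A t k j \<longleftrightarrow> (\<exists>vs. is_dpath N A j t vs \<and> length vs \<le> Suc k)"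

lemma reach_prepend: "reach N A t k i \<Longrightarrow> arc A j i \<Longrightarrow> j < N \<Longrightarrow> reach N A t (Suc k) j"
proof -
  assume r: "reach N A t k i" and a: "arc A j i" and j: "j < N"
  obtain vs where vs: "is_dpath N A i t vs" "length vs \<le> Suc k" using r unfolding reach_def by blast
  obtain ws where ws: "is_dpath N A j t ws" "length ws \<le> Suc (length vs)"
    using path_prepend[OF vs(1) a j] by blast
  have "length ws \<le> Suc (Suc k)" using ws(2) vs(2) by simp
  then show ?thesis unfolding reach_def using ws(1) by blast
qed

lemma reach_mono: "reach N A t k j \<Longrightarrow> reach N A t (Suc k) j"
  unfolding reach_def using le_SucI by blast

lemma lap_carrier: "laplacian N A \<in> carrier_mat N N"
  unfolding laplacian_def by simp

lemma lap_index: "i < N \<Longrightarrow> j < N \<Longrightarrow> laplacian N A $$ (i,j) =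
   (if i = j then (\<Sum>k<N. A $$ (i,k)) else 0) - A $$ (i,j)"
  unfolding laplacian_def by simp

lemma pow_Suc_index:
  assumes L: "(L :: 'a :: comm_semiring_1 mat) \<in> carrier_mat N N" and t: "t < N" and j: "j < N"
  shows "(L ^\<^sub>m Suc k) $$ (t,j) = (\<Sum>i<N. (L ^\<^sub>m k) $$ (t,i) * L $$ (i,j))"
proof -
  have P: "L ^\<^sub>m k \<in> carrier_mat N N" using L by (rule pow_carrier_mat)
  show ?thesis using L P t j
    by (simp add: scalar_prod_def atLeast0LessThan)
qed

lemma reach0: "t < N \<Longrightarrow> reach N A t 0 j \<longleftrightarrow> j = t"
proof
  assume "reach N A t 0 j"
  then obtain vs where "is_dpath N A j t vs" "length vs \<le> 1" unfolding reach_def by auto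
  then show "j = t" unfolding is_dpath_def by (cases vs) auto
next
  assume "t < N" "j = t"
  then have "is_dpath N A j t [t]" unfolding is_dpath_def by auto
  then show "reach N A t 0 j" unfolding reach_def by (intro exI[of _ "[t]"]) auto
qed

lemma lap_pow:
  assumes W: "weighted_digraph N A" and t: "t < N"
  shows "\<forall>j<N. (\<not> reach N A t k j \<longrightarrow> (laplacian N A ^\<^sub>m k) $$ (t,j) = 0) \<and>
     (reach N A t k j \<and> \<not> (0 < k \<and> reach N A t (k-1) j) \<longrightarrow> 0 < (-1)^k * (laplacian N A ^\<^sub>m k) $$ (t,j))"
proof (induction k)
  case 0
  have "dim_row (laplacian N A) = N" using lap_carrier by (metis carrier_matD(1))
  then show ?case using t reach0[OF t] by auto
next
  case (Suc k)
  let ?L = "laplacian N A"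
  let ?R = "reach N A t"
  have Lc: "?L \<in> carrier_mat N N" by (rule lap_carrier)
  have nonneg: "\<And>i j. i < N \<Longrightarrow> j < N \<Longrightarrow> 0 \<le> A $$ (i,j)" using W unfolding weighted_digraph_def by auto
  have off: "\<And>i j. i < N \<Longrightarrow> j < N \<Longrightarrow> i \<noteq> j \<Longrightarrow> ?L $$ (i,j) = - A $$ (i,j)"
    by (simp add: lap_index)
  have arcI: "\<And>i j. 0 < A $$ (i,j) \<Longrightarrow> arc A j i" unfolding arc_def by simp
  have IH1: "\<And>i. i < N \<Longrightarrow> \<not> ?R k i \<Longrightarrow> (?L ^\<^sub>m k) $$ (t,i) = 0"
    using Suc.IH by blast
  have IH2: "\<And>i. i < N \<Longrightarrow> ?R k i \<Longrightarrow> \<not> (0 < k \<and> ?R (k-1) i) \<Longrightarrow> 0 < (-1)^k * (?L ^\<^sub>m k) $$ (t,i)"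
    using Suc.IH by blast
  show ?case
  proof (intro allI impI conjI)
    fix j assume j: "j < N"
    have sum: "(?L ^\<^sub>m Suc k) $$ (t,j) = (\<Sum>i<N. (?L ^\<^sub>m k) $$ (t,i) * ?L $$ (i,j))"
      by (rule pow_Suc_index[OF Lc t j])
    {
      assume nr: "\<not> ?R (Suc k) j"
      have nrk: "\<not> ?R k j" using nr reach_mono by blast
      show "(?L ^\<^sub>m Suc k) $$ (t,j) = 0" unfolding sum
      proof (rule sum.neutral, intro ballI)
        fix i assume i: "i \<in> {..<N}"
        show "(?L ^\<^sub>m k) $$ (t,i) * ?L $$ (i,j) = 0"
        proof (cases "i = j")
          case True then show ?thesis using IH1 nrk j by simp
        next
          case False
          show ?thesis
          proof (cases "0 < A $$ (i,j)")
            case True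
            have "\<not> ?R k i" using reach_prepend[OF _ arcI[OF True] j] nr by blast
            then show ?thesis using IH1 i by simp
          next
            case False2: False
            have "A $$ (i,j) = 0" using nonneg[of i j] i j False2 by simp
            then show ?thesis using off[of i j] i j False by simp
          qed
        qed
      qed
    }
    {
      assume r: "?R (Suc k) j \<and> \<not> (0 < Suc k \<and> ?R (Suc k - 1) j)"
      then have nrk: "\<not> ?R k j" by simp
      have Lkj: "(?L ^\<^sub>m k) $$ (t,j) = 0" using IH1 nrk j by simp
      have noprev: "\<not> (0 < k \<and> ?R (k-1) i)" if "arc A j i" for i
      proof
        assume "0 < k \<and> ?R (k-1) i"
        then have "?R (Suc (k-1)) j" using reach_prepend[OF _ that j] by blast
        then show False using nrk \<open>0 < k \<and> ?R (k-1) i\<close> by simp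
      qed
      obtain vs where vs: "is_dpath N A j t vs" "length vs \<le> Suc (Suc k)"
        using r unfolding reach_def by auto
      have "\<not> length vs \<le> Suc k" using vs nrk unfolding reach_def by blast
      then have lvs: "length vs = Suc (Suc k)" using vs by simp
      define i0 where "i0 = vs ! 1"
      have tl: "is_dpath N A i0 t (tl vs) \<and> arc A j i0 \<and> i0 \<noteq> j \<and> i0 < N"
        unfolding i0_def using path_tl[OF vs(1)] lvs by simp
      have Ri0: "?R k i0" unfolding reach_def using tl lvs by (intro exI[of _ "tl vs"]) simp
      have pos0: "0 < (-1)^k * (?L ^\<^sub>m k) $$ (t,i0)" using IH2 tl Ri0 noprev[of i0] by blast
      have A0: "0 < A $$ (i0,j)" using tl unfolding arc_def by simp
      define f where "f i = (-1::real)^(Suc k) * ((?L ^\<^sub>m k) $$ (t,i) * ?L $$ (i,j))" for i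
      have fnn: "0 \<le> f i" if i: "i \<in> {..<N}" for i
      proof (cases "i = j")
        case True then show ?thesis using Lkj unfolding f_def by simp
      next
        case False
        have fi: "f i = A $$ (i,j) * ((-1)^k * (?L ^\<^sub>m k) $$ (t,i))"
          unfolding f_def using off[of i j] i j False by simp
        show ?thesis
        proof (cases "0 < A $$ (i,j)")
          case True
          have np: "\<not> (0 < k \<and> ?R (k-1) i)" using noprev arcI[OF True] by blast
          show ?thesis
          proof (cases "?R k i")
            case True
            then have "0 < (-1)^k * (?L ^\<^sub>m k) $$ (t,i)" using IH2 i np by blast
            then show ?thesis unfolding fi using \<open>0 < A $$ (i,j)\<close> by simp
          next
            case False
            then show ?thesis unfolding fi using IH1 i by simp
          qed
        next
          case False
          have "A $$ (i,j) = 0" using nonneg[of i j] i j False by simp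
          then show ?thesis unfolding fi by simp
        qed
      qed
      have fi0: "0 < f i0"
      proof -
        have "f i0 = A $$ (i0,j) * ((-1)^k * (?L ^\<^sub>m k) $$ (t,i0))"
          unfolding f_def using off[of i0 j] tl j by simp
        then show ?thesis using A0 pos0 by simp
      qed
      have "f i0 \<le> sum f {..<N}"
        by (rule member_le_sum) (use tl fnn in auto)
      moreover have "sum f {..<N} = (-1)^(Suc k) * (?L ^\<^sub>m Suc k) $$ (t,j)"
        unfolding sum f_def by (simp add: sum_distrib_left)
      ultimately show "0 < (-1)^(Suc k) * (?L ^\<^sub>m Suc k) $$ (t,j)" using fi0 by simp
    }
  qed
qed



primrec tel :: "nat \<Rightarrow> 'a \<Rightarrow> 'a \<Rightarrow> 'a mat \<Rightarrow> nat \<Rightarrow> 'a :: comm_ring_1 mat" where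
  "tel N Q P Lp 0 = 0\<^sub>m N N"
| "tel N Q P Lp (Suc n) = Q \<cdot>\<^sub>m tel N Q P Lp n + ((-P)^n) \<cdot>\<^sub>m (Lp ^\<^sub>m n)"

lemma tel_carrier: "Lp \<in> carrier_mat N N \<Longrightarrow> tel N Q P Lp n \<in> carrier_mat N N"
  by (induction n) auto

lemma tel_eq:
  fixes Lp :: "'a :: comm_ring_1 mat"
  assumes L: "Lp \<in> carrier_mat N N"
  shows "tel N Q P Lp n * (Q \<cdot>\<^sub>m 1\<^sub>m N + P \<cdot>\<^sub>m Lp) = Q^n \<cdot>\<^sub>m 1\<^sub>m N - (-P)^n \<cdot>\<^sub>m (Lp ^\<^sub>m n)"
proof (induction n)
  case 0
  have "dim_row Lp = N" using L by auto
  then show ?case using L by (intro eq_matI) auto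
next
  case (Suc n)
  let ?K = "Q \<cdot>\<^sub>m 1\<^sub>m N + P \<cdot>\<^sub>m Lp"
  let ?S = "tel N Q P Lp n"
  let ?Ln = "Lp ^\<^sub>m n"
  have K: "?K \<in> carrier_mat N N" using L by auto
  have S: "?S \<in> carrier_mat N N" using tel_carrier[OF L] .
  have Ln: "?Ln \<in> carrier_mat N N" using L by (rule pow_carrier_mat)
  have Ln1: "Lp ^\<^sub>m Suc n \<in> carrier_mat N N" using L by (rule pow_carrier_mat)
  have e1: "tel N Q P Lp (Suc n) * ?K = Q \<cdot>\<^sub>m (?S * ?K) + (-P)^n \<cdot>\<^sub>m (?Ln * ?K)"
    using S Ln K by (simp add: add_mult_distrib_mat[of _ N N] mult_smult_assoc_mat[of _ N N])
  have e2: "?Ln * ?K = Q \<cdot>\<^sub>m ?Ln + P \<cdot>\<^sub>m (Lp ^\<^sub>m Suc n)"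
  proof -
    have "?Ln * ?K = ?Ln * (Q \<cdot>\<^sub>m 1\<^sub>m N) + ?Ln * (P \<cdot>\<^sub>m Lp)"
      by (rule mult_add_distrib_mat[OF Ln]) (use L in auto)
    also have "\<dots> = Q \<cdot>\<^sub>m (?Ln * 1\<^sub>m N) + P \<cdot>\<^sub>m (?Ln * Lp)"
      using mult_smult_distrib[OF Ln one_carrier_mat] mult_smult_distrib[OF Ln L] by simp
    also have "?Ln * 1\<^sub>m N = ?Ln" using right_mult_one_mat[OF Ln] .
    finally show ?thesis by simp
  qed
  show ?case unfolding e1 e2 Suc.IH
  proof (rule eq_matI)
    fix i j assume ij: "i < dim_row (Q ^ Suc n \<cdot>\<^sub>m 1\<^sub>m N - (- P) ^ Suc n \<cdot>\<^sub>m Lp ^\<^sub>m Suc n)"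
      "j < dim_col (Q ^ Suc n \<cdot>\<^sub>m 1\<^sub>m N - (- P) ^ Suc n \<cdot>\<^sub>m Lp ^\<^sub>m Suc n)"
    then have i: "i < N" and j: "j < N" using L by auto
    show "(Q \<cdot>\<^sub>m (Q ^ n \<cdot>\<^sub>m 1\<^sub>m N - (- P) ^ n \<cdot>\<^sub>m Lp ^\<^sub>m n) +
        (- P) ^ n \<cdot>\<^sub>m (Q \<cdot>\<^sub>m Lp ^\<^sub>m n + P \<cdot>\<^sub>m Lp ^\<^sub>m Suc n)) $$ (i, j) =
       (Q ^ Suc n \<cdot>\<^sub>m 1\<^sub>m N - (- P) ^ Suc n \<cdot>\<^sub>m Lp ^\<^sub>m Suc n) $$ (i, j)"
      using i j carrier_matD[OF Ln] carrier_matD[OF Ln1] by (simp add: algebra_simps)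
  qed (use Ln Ln1 in auto)
qed

lemma tel_entry_zero:
  assumes L: "Lp \<in> carrier_mat N N" and o: "ob < N" and c: "c < N"
    and z: "\<And>k. k < d \<Longrightarrow> (Lp ^\<^sub>m k) $$ (ob,c) = 0"
  shows "n \<le> d \<Longrightarrow> tel N Q P Lp n $$ (ob,c) = 0"
proof (induction n)
  case 0 then show ?case using o c by simp
next
  case (Suc n)
  have Ln: "Lp ^\<^sub>m n \<in> carrier_mat N N" using L by (rule pow_carrier_mat)
  have S: "tel N Q P Lp n \<in> carrier_mat N N" using tel_carrier[OF L] .
  show ?case using Suc o c z[of n] carrier_matD[OF Ln] carrier_matD[OF S] by simp
qed

lemma tel_entry:
  assumes L: "Lp \<in> carrier_mat N N" and o: "ob < N" and c: "c < N"
    and z: "\<And>k. k < d \<Longrightarrow> (Lp ^\<^sub>m k) $$ (ob,c) = 0"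
  shows "tel N Q P Lp (Suc d) $$ (ob,c) = (-P)^d * (Lp ^\<^sub>m d) $$ (ob,c)"
proof -
  have Ln: "Lp ^\<^sub>m d \<in> carrier_mat N N" using L by (rule pow_carrier_mat)
  have S: "tel N Q P Lp d \<in> carrier_mat N N" using tel_carrier[OF L] .
  show ?thesis using tel_entry_zero[OF L o c z, where n=d and Q=Q and P=P] o c carrier_matD[OF Ln] carrier_matD[OF S] by simp
qed

lemma adj_rel:
  fixes Lp :: "'a :: comm_ring_1 mat" and P Q :: 'a
  assumes L: "Lp \<in> carrier_mat N N" and o: "ob < N" and c: "c < N"
  defines "Kp \<equiv> Q \<cdot>\<^sub>m 1\<^sub>m N + P \<cdot>\<^sub>m Lp"
  shows "det Kp * tel N Q P Lp n $$ (ob,c) =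
    Q^n * adj_mat Kp $$ (ob,c) - (-P)^n * (Lp ^\<^sub>m n * adj_mat Kp) $$ (ob,c)"
proof -
  let ?S = "tel N Q P Lp n"
  let ?Ln = "Lp ^\<^sub>m n"
  let ?A = "adj_mat Kp"
  have K: "Kp \<in> carrier_mat N N" unfolding Kp_def using L by auto
  have S: "?S \<in> carrier_mat N N" using tel_carrier[OF L] .
  have Ln: "?Ln \<in> carrier_mat N N" using L by (rule pow_carrier_mat)
  have Ac: "?A \<in> carrier_mat N N" using adj_mat(1)[OF K] .
  have "(?S * Kp) * ?A = ?S * (Kp * ?A)" using S K Ac by simp
  also have "\<dots> = ?S * (det Kp \<cdot>\<^sub>m 1\<^sub>m N)" using adj_mat(2)[OF K] by simp
  also have "\<dots> = det Kp \<cdot>\<^sub>m ?S" using mult_smult_distrib[OF S one_carrier_mat] S by simp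
  finally have e1: "(?S * Kp) * ?A = det Kp \<cdot>\<^sub>m ?S" .
  have "(?S * Kp) * ?A = (Q^n \<cdot>\<^sub>m 1\<^sub>m N - (-P)^n \<cdot>\<^sub>m ?Ln) * ?A"
    using tel_eq[OF L, of Q P n] unfolding Kp_def by simp
  also have "\<dots> = (Q^n \<cdot>\<^sub>m 1\<^sub>m N) * ?A - ((-P)^n \<cdot>\<^sub>m ?Ln) * ?A"
    by (rule minus_mult_distrib_mat) (use Ln Ac in auto)
  also have "\<dots> = Q^n \<cdot>\<^sub>m ?A - (-P)^n \<cdot>\<^sub>m (?Ln * ?A)"
    using mult_smult_assoc_mat[OF one_carrier_mat Ac] mult_smult_assoc_mat[OF Ln Ac] Ac by simp
  finally have e2: "(?S * Kp) * ?A = Q^n \<cdot>\<^sub>m ?A - (-P)^n \<cdot>\<^sub>m (?Ln * ?A)" .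
  have "(det Kp \<cdot>\<^sub>m ?S) $$ (ob,c) = (Q^n \<cdot>\<^sub>m ?A - (-P)^n \<cdot>\<^sub>m (?Ln * ?A)) $$ (ob,c)"
    using e1 e2 by simp
  then show ?thesis using o c carrier_matD[OF Ln] carrier_matD[OF S] carrier_matD[OF Ac] by simp
qed



lemma field_part:
  fixes Kp :: "'a :: idom mat" and K :: "'a fract mat"
  assumes Kp: "Kp \<in> carrier_mat N N" and KK: "map_mat to_fract Kp = to_fract Q \<cdot>\<^sub>m K"
    and Q: "Q \<noteq> 0" and D: "det Kp \<noteq> 0" and o: "ob < N" and c: "c < N"
  shows "mat_inv K \<in> carrier_mat N N \<and> K * mat_inv K = 1\<^sub>m N \<and>
    to_fract Q * to_fract (adj_mat Kp $$ (ob,c)) = to_fract (det Kp) * mat_inv K $$ (ob,c)"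
proof -
  interpret tf: inj_comm_ring_hom "to_fract :: 'a \<Rightarrow> 'a fract" by (unfold_locales, auto)
  have K: "K \<in> carrier_mat N N"
  proof -
    have "dim_row (map_mat to_fract Kp) = N" "dim_col (map_mat to_fract Kp) = N" using Kp by auto
    then show ?thesis unfolding KK by auto
  qed
  have "to_fract (det Kp) = det (map_mat to_fract Kp)" by simp
  also have "\<dots> = to_fract Q ^ N * det K" unfolding KK using K by simp
  finally have dK: "to_fract (det Kp) = to_fract Q ^ N * det K" .
  have dK0: "det K \<noteq> 0" using dK D by auto
  define B where "B = inverse (det K) \<cdot>\<^sub>m adj_mat K"
  have Ac: "adj_mat K \<in> carrier_mat N N" using adj_mat(1)[OF K] .
  have Bc: "B \<in> carrier_mat N N" unfolding B_def using Ac by simp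
  have KB: "K * B = 1\<^sub>m N"
  proof -
    have "K * B = inverse (det K) \<cdot>\<^sub>m (K * adj_mat K)" unfolding B_def using mult_smult_distrib[OF K Ac] .
    also have "\<dots> = inverse (det K) \<cdot>\<^sub>m (det K \<cdot>\<^sub>m 1\<^sub>m N)" using adj_mat(2)[OF K] by simp
    also have "\<dots> = 1\<^sub>m N" using dK0 by (intro eq_matI) auto
    finally show ?thesis .
  qed
  have BK: "B * K = 1\<^sub>m N"
  proof -
    have "B * K = inverse (det K) \<cdot>\<^sub>m (adj_mat K * K)" unfolding B_def using mult_smult_assoc_mat[OF Ac K] .
    also have "\<dots> = inverse (det K) \<cdot>\<^sub>m (det K \<cdot>\<^sub>m 1\<^sub>m N)" using adj_mat(3)[OF K] by simp
    also have "\<dots> = 1\<^sub>m N" using dK0 by (intro eq_matI) auto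
    finally show ?thesis .
  qed
  have "\<exists>B. inverts_mat K B \<and> inverts_mat B K"
    using KB BK K Bc unfolding inverts_mat_def by (intro exI[of _ B]) auto
  then have inv: "inverts_mat K (mat_inv K) \<and> inverts_mat (mat_inv K) K"
    unfolding mat_inv_def by (rule someI_ex)
  let ?Ki = "mat_inv K"
  have KKi: "K * ?Ki = 1\<^sub>m N" using inv K unfolding inverts_mat_def by auto
  have KiK: "?Ki * K = 1\<^sub>m (dim_row ?Ki)" using inv unfolding inverts_mat_def by auto
  have c1: "dim_col ?Ki = N" using arg_cong[OF KKi, of dim_col] by simp
  have c2: "dim_row ?Ki = N" using arg_cong[OF KiK, of dim_col] K by simp
  have Kic: "?Ki \<in> carrier_mat N N" using c1 c2 by auto
  let ?Ap = "adj_mat Kp"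
  let ?Af = "map_mat to_fract ?Ap"
  have Apc: "?Ap \<in> carrier_mat N N" using adj_mat(1)[OF Kp] .
  have Afc: "?Af \<in> carrier_mat N N" using Apc by simp
  have "?Af * map_mat to_fract Kp = map_mat to_fract (?Ap * Kp)"
    using tf.mat_hom_mult[OF Apc Kp] by simp
  also have "\<dots> = map_mat to_fract (det Kp \<cdot>\<^sub>m 1\<^sub>m N)" using adj_mat(3)[OF Kp] by simp
  also have "\<dots> = to_fract (det Kp) \<cdot>\<^sub>m 1\<^sub>m N" by (intro eq_matI) auto
  finally have e1: "?Af * (to_fract Q \<cdot>\<^sub>m K) = to_fract (det Kp) \<cdot>\<^sub>m 1\<^sub>m N" unfolding KK .
  have "(?Af * (to_fract Q \<cdot>\<^sub>m K)) * ?Ki = to_fract Q \<cdot>\<^sub>m ((?Af * K) * ?Ki)"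
    using mult_smult_distrib[OF Afc K] mult_smult_assoc_mat[of "?Af * K" N N ?Ki N] Afc K Kic by simp
  also have "\<dots> = to_fract Q \<cdot>\<^sub>m ?Af" using Afc K Kic KKi by simp
  finally have e2: "(?Af * (to_fract Q \<cdot>\<^sub>m K)) * ?Ki = to_fract Q \<cdot>\<^sub>m ?Af" .
  have "(to_fract (det Kp) \<cdot>\<^sub>m 1\<^sub>m N) * ?Ki = to_fract (det Kp) \<cdot>\<^sub>m ?Ki"
    using mult_smult_assoc_mat[OF one_carrier_mat Kic] Kic by simp
  with e1 e2 have "to_fract Q \<cdot>\<^sub>m ?Af = to_fract (det Kp) \<cdot>\<^sub>m ?Ki" by simp
  then have "(to_fract Q \<cdot>\<^sub>m ?Af) $$ (ob,c) = (to_fract (det Kp) \<cdot>\<^sub>m ?Ki) $$ (ob,c)" by simp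
  then have "to_fract Q * to_fract (?Ap $$ (ob,c)) = to_fract (det Kp) * ?Ki $$ (ob,c)"
    using o c carrier_matD[OF Apc] carrier_matD[OF Kic] by simp
  then show ?thesis using Kic KKi by simp
qed



lemma order_pow: "(p :: 'a :: idom poly) \<noteq> 0 \<Longrightarrow> order x (p ^ k) = k * order x p"
proof (induction k)
  case (Suc k)
  have "p * p ^ k \<noteq> 0" using Suc.prems by simp
  then show ?case using Suc order_mult[of p "p^k" x] by simp
qed simp

lemma cpoly_nz: "f \<noteq> 0 \<Longrightarrow> cpoly f \<noteq> 0"
  unfolding cpoly_def by (subst map_poly_eq_0_iff) auto

theorem corollary1:
  fixes N :: nat and A :: "real mat" and a b p q :: "real poly"
    and c ob :: nat and s0 :: complex and m :: nat
  assumes "weighted_digraph N A"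
    and "c < N" and "ob < N"
    and "has_dpath N A c ob"
    and "a \<noteq> 0" and "b \<noteq> 0" and "p \<noteq> 0" and "q \<noteq> 0"
    and "\<forall>z. \<not> (poly (cpoly (b * q)) z = 0 \<and> poly (cpoly (a * p)) z = 0)"
    and "poly (cpoly (b * q)) s0 = 0"
    and "m = order s0 (cpoly (b * q))"
  shows "zero_mult (transfer_fun N A a b p q c ob) s0 (int ((dpath_dist N A c ob + 1) * m))"
proof -
  note W = assms(1) and cN = assms(2) and oN = assms(3)
  define P where "P = cpoly (b * q)"
  define Q where "Q = cpoly (a * p)"
  have P0: "poly P s0 = 0" using assms(10) unfolding P_def .
  have Qs0: "poly Q s0 \<noteq> 0" using assms(9) P0 unfolding P_def Q_def by blast
  have Qnz: "Q \<noteq> 0" using Qs0 by auto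
  have Pnz: "P \<noteq> 0" unfolding P_def using assms(6,8) by (intro cpoly_nz) simp
  have mP: "m = order s0 P" using assms(11) unfolding P_def .
  define L where "L = laplacian N A"
  define d where "d = dpath_dist N A c ob"
  have Lc: "L \<in> carrier_mat N N" unfolding L_def by (rule lap_carrier)
  obtain vs0 where vs0: "is_dpath N A c ob vs0" using assms(4) unfolding has_dpath_def by blast
  have ex: "\<exists>l vs. is_dpath N A c ob vs \<and> length vs = l + 1"
    using vs0 unfolding is_dpath_def by (intro exI[of _ "length vs0 - 1"] exI[of _ vs0]) auto
  have "\<exists>vs. is_dpath N A c ob vs \<and> length vs = d + 1"
    unfolding d_def dpath_dist_def by (rule LeastI_ex[OF ex])
  then have Rd: "reach N A ob d c" unfolding reach_def by auto
  have nR: "\<not> reach N A ob k c" if k: "k < d" for k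
  proof
    assume "reach N A ob k c"
    then obtain vs where vs: "is_dpath N A c ob vs" "length vs \<le> Suc k" unfolding reach_def by blast
    have "vs \<noteq> []" using vs unfolding is_dpath_def by auto
    then have "is_dpath N A c ob vs \<and> length vs = (length vs - 1) + 1" using vs by simp
    then have "d \<le> length vs - 1" unfolding d_def dpath_dist_def by (intro Least_le) blast
    then show False using vs k by simp
  qed
  have zL: "(L ^\<^sub>m k) $$ (ob,c) = 0" if k: "k < d" for k
    using lap_pow[OF W oN, of k] nR[OF k] cN unfolding L_def by blast
  have "0 < (-1)^d * (L ^\<^sub>m d) $$ (ob,c)"
  proof -
    have "\<not> (0 < d \<and> reach N A ob (d-1) c)" using nR[of "d-1"] by auto
    then show ?thesis using lap_pow[OF W oN, of d] Rd cN unfolding L_def by blast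
  qed
  then have lnz: "(L ^\<^sub>m d) $$ (ob,c) \<noteq> 0" by auto
  define h where "h = (\<lambda>x::real. [:complex_of_real x:])"
  interpret hh: comm_ring_hom h
    by (unfold_locales) (auto simp: h_def)
  define Lp where "Lp = map_mat h L"
  have Lpc: "Lp \<in> carrier_mat N N" unfolding Lp_def using Lc by simp
  have Lpk: "(Lp ^\<^sub>m k) $$ (ob,c) = h ((L ^\<^sub>m k) $$ (ob,c))" for k
  proof -
    have "Lp ^\<^sub>m k = map_mat h (L ^\<^sub>m k)" unfolding Lp_def using hh.mat_hom_pow[OF Lc] by simp
    moreover have "L ^\<^sub>m k \<in> carrier_mat N N" using Lc by (rule pow_carrier_mat)
    ultimately show ?thesis using oN cN carrier_matD[of "L ^\<^sub>m k" N N] by simp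
  qed
  have zLp: "(Lp ^\<^sub>m k) $$ (ob,c) = 0" if "k < d" for k
    using Lpk[of k] zL[OF that] by (simp add: h_def)
  define Kp where "Kp = Q \<cdot>\<^sub>m 1\<^sub>m N + P \<cdot>\<^sub>m Lp"
  have Kpc: "Kp \<in> carrier_mat N N" unfolding Kp_def using Lpc by simp
  define D where "D = det Kp"
  define Ap where "Ap = adj_mat Kp"
  have DS0: "poly D s0 \<noteq> 0"
  proof -
    interpret ev: comm_ring_hom "\<lambda>f. poly f s0" by (unfold_locales) auto
    have "map_mat (\<lambda>f. poly f s0) Kp = poly Q s0 \<cdot>\<^sub>m 1\<^sub>m N"
      unfolding Kp_def using Lpc P0 by (intro eq_matI) auto
    then have "poly D s0 = det (poly Q s0 \<cdot>\<^sub>m 1\<^sub>m N)" unfolding D_def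
      using ev.hom_det[of Kp] by simp
    also have "\<dots> = poly Q s0 ^ N" by simp
    finally show ?thesis using Qs0 by simp
  qed
  have Dnz: "D \<noteq> 0" using DS0 by auto
  define l where "l = h ((L ^\<^sub>m d) $$ (ob,c))"
  define X where "X = (Lp ^\<^sub>m Suc d * Ap) $$ (ob,c)"
  define R where "R = D * l - P * X"
  have rel: "D * ((-P)^d * l) = Q^(Suc d) * Ap $$ (ob,c) - (-P)^(Suc d) * X"
    using adj_rel[OF Lpc oN cN, where Q=Q and P=P and n="Suc d"] tel_entry[OF Lpc oN cN zLp, where Q=Q and P=P] Lpk[of d]
    unfolding D_def Ap_def Kp_def X_def l_def by simp
  have QA: "Q^(Suc d) * Ap $$ (ob,c) = (-P)^d * R"
    using rel unfolding R_def by (simp add: algebra_simps)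
  have RS0: "poly R s0 \<noteq> 0" unfolding R_def l_def h_def using DS0 P0 lnz by simp
  have Rnz: "R \<noteq> 0" using RS0 by auto
  define M where "M = Mfun a b p q"
  have MF: "M = Fraction_Field.Fract P Q" unfolding M_def Mfun_def P_def Q_def ..
  have MQ: "to_fract Q * M = to_fract P" unfolding MF Fract_conv_to_fract using Qnz by simp
  define K where "K = 1\<^sub>m N + M \<cdot>\<^sub>m map_mat const_rf L"
  have KK: "map_mat to_fract Kp = to_fract Q \<cdot>\<^sub>m K"
  proof (rule eq_matI)
    fix i j assume "i < dim_row (to_fract Q \<cdot>\<^sub>m K)" "j < dim_col (to_fract Q \<cdot>\<^sub>m K)"
    then have i: "i < N" and j: "j < N" unfolding K_def using Lc by auto
    have "const_rf (L $$ (i,j)) = to_fract (h (L $$ (i,j)))" unfolding const_rf_def to_fract_def h_def ..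
    then show "map_mat to_fract Kp $$ (i, j) = (to_fract Q \<cdot>\<^sub>m K) $$ (i, j)"
      unfolding Kp_def K_def Lp_def using i j Lc MQ
      by (simp add: algebra_simps flip: MQ)
  qed (use Kpc Lc in \<open>auto simp: K_def\<close>)
  have FP: "mat_inv K \<in> carrier_mat N N \<and> K * mat_inv K = 1\<^sub>m N \<and>
    to_fract Q * to_fract (Ap $$ (ob,c)) = to_fract D * mat_inv K $$ (ob,c)"
    unfolding Ap_def D_def using field_part[OF Kpc KK Qnz _ oN cN] Dnz unfolding D_def by blast
  define T where "T = transfer_fun N A a b p q c ob"
  have T: "T = M * mat_inv K $$ (ob,c)"
  proof -
    have "T = (mat_inv K * (M \<cdot>\<^sub>m 1\<^sub>m N)) $$ (ob,c)"
      unfolding T_def transfer_fun_def Let_def K_def M_def L_def ..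
    also have "mat_inv K * (M \<cdot>\<^sub>m 1\<^sub>m N) = M \<cdot>\<^sub>m mat_inv K"
      using mult_smult_distrib[OF conjunct1[OF FP] one_carrier_mat] conjunct1[OF FP] by simp
    finally show ?thesis using conjunct1[OF FP] oN cN by simp
  qed
  define nn where "nn = P * (-P)^d * R"
  define dd where "dd = Q^(Suc d) * D"
  have ddnz: "dd \<noteq> 0" unfolding dd_def using Qnz Dnz by simp
  have nnnz: "nn \<noteq> 0" unfolding nn_def using Pnz Rnz by simp
  have "to_fract dd * T = to_fract nn"
  proof -
    have "to_fract dd * T = to_fract (Q^(Suc d)) * (to_fract D * mat_inv K $$ (ob,c)) * M"
      unfolding dd_def T by (simp add: algebra_simps)
    also have "\<dots> = to_fract (Q^(Suc d)) * (to_fract Q * M) * to_fract (Ap $$ (ob,c))"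
      using FP by (simp add: algebra_simps)
    also have "\<dots> = to_fract P * to_fract (Q^(Suc d) * Ap $$ (ob,c))"
      unfolding MQ by (simp add: algebra_simps)
    also have "\<dots> = to_fract nn" unfolding QA nn_def by (simp add: algebra_simps)
    finally show ?thesis .
  qed
  then have TF: "T = Fraction_Field.Fract nn dd" unfolding Fract_conv_to_fract using ddnz
    by (simp add: field_simps)
  have ordn: "order s0 nn = Suc d * m"
  proof -
    have "order s0 nn = order s0 P + order s0 ((-P)^d) + order s0 R"
    proof -
      have "P * (-P)^d \<noteq> 0" using Pnz by simp
      then show ?thesis unfolding nn_def using nnnz[unfolded nn_def] order_mult[of "P * (-P)^d" R s0]
          order_mult[of P "(-P)^d" s0] by simp
    qed
    also have "order s0 R = 0" using RS0 by (rule order_0I)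
    also have "order s0 ((-P)^d) = d * order s0 P" using Pnz by (simp add: order_pow)
    finally show ?thesis using mP by simp
  qed
  have ordd: "order s0 dd = 0"
    by (rule order_0I) (use Qs0 DS0 in \<open>simp add: dd_def\<close>)
  show ?thesis unfolding zero_mult_def T_def[symmetric] d_def[symmetric]
    using TF nnnz ddnz ordn ordd by (intro exI[of _ nn] exI[of _ dd]) simp
qed


end
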